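(* For every $d\geq 3$, \[ \mathscr{A}(\otimes_{j=1}^d\mathbb{R}^4)=\frac{1}{\sqrt{4^{d-1}}}<\mathscr{A}(\mathrm{Sym}^d(\mathbb{R}^4)) \qquad\text{and}\qquad \mathscr{A}(\otimes_{j=1}^d\mathbb{R}^8)=\frac{1}{\sqrt{8^{d-1}}}<\mathscr{A}(\mathrm{Sym}^d(\mathbb{R}^8)). \]
   Context: Norms on real $n^d$-tensors: \begin{itemize} \item The Frobenius norm is $\|A\|_F=(\sum a_{i_1\dots i_d}^2)^{1/2}$. \item The spectral norm is $\|A\|_2=\max_{\|x^{(j)}\|=1}\sum a_{i_1\dots i_d}x^{(1)}_{i_1}\cdots x^{(d)}_{i_d}$. \end{itemize} For a linear subspace $V$ (the full tensor space $\otimes_{j=1}^d\mathbb{R}^n$ or the space $\mathrm{Sym}^d(\mathbb{R}^n)$ of symmetric tensors), the best rank-one approximation ratio is $\mathscr{A}(V)=\min_{0\neq A\in V}\|A\|_2/\|A\|_F$. *)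

theory Defs
  imports "HOL-Analysis.Analysis"
begin

text \<open>Real tensors of order d over R^n, represented as functions on multi-indices
  (lists of length d with entries < n), vanishing outside the index set.\<close>

definition tidx :: "nat \<Rightarrow> nat \<Rightarrow> nat list set" where
  "tidx n d = {is. length is = d \<and> (\<forall>i\<in>set is. i < n)}"

definition tensors :: "nat \<Rightarrow> nat \<Rightarrow> (nat list \<Rightarrow> real) set" where
  "tensors n d = {A. \<forall>is. is \<notin> tidx n d \<longrightarrow> A is = 0}"

definition sym_tensors :: "nat \<Rightarrow> nat \<Rightarrow> (nat list \<Rightarrow> real) set" where
  "sym_tensors n d = {A \<in> tensors n d. \<forall>is\<in>tidx n d. \<forall>p. p permutes {..<d} \<longrightarrow>
       A is = A (map (\<lambda>k. is ! p k) [0..<d])}"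

definition frob_norm :: "nat \<Rightarrow> nat \<Rightarrow> (nat list \<Rightarrow> real) \<Rightarrow> real" where
  "frob_norm n d A = sqrt (\<Sum>is\<in>tidx n d. (A is)\<^sup>2)"

definition spec_norm :: "nat \<Rightarrow> nat \<Rightarrow> (nat list \<Rightarrow> real) \<Rightarrow> real" where
  "spec_norm n d A = Sup ((\<lambda>x. \<Sum>is\<in>tidx n d. A is * (\<Prod>j<d. x j (is ! j)))
       ` {x :: nat \<Rightarrow> nat \<Rightarrow> real. \<forall>j<d. (\<Sum>i<n. (x j i)\<^sup>2) = 1})"

definition best_r1_ratio :: "nat \<Rightarrow> nat \<Rightarrow> (nat list \<Rightarrow> real) set \<Rightarrow> real" where
  "best_r1_ratio n d V = Inf ((\<lambda>A. spec_norm n d A / frob_norm n d A) ` (V - {\<lambda>_. 0}))"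

end

theory Submission
  imports Defs
begin


definition tev :: "nat \<Rightarrow> nat \<Rightarrow> real" where "tev i = (\<lambda>k. if k = i then 1 else 0)"
definition tnrm :: "nat \<Rightarrow> (nat \<Rightarrow> real) \<Rightarrow> real" where "tnrm n v = (\<Sum>k<n. (v k)\<^sup>2)"
definition tform :: "nat \<Rightarrow> nat \<Rightarrow> (nat list \<Rightarrow> real) \<Rightarrow> (nat \<Rightarrow> nat \<Rightarrow> real) \<Rightarrow> real" where
  "tform n d A x = (\<Sum>ix\<in>tidx n d. A ix * (\<Prod>j<d. x j (ix ! j)))"
definition feas :: "nat \<Rightarrow> nat \<Rightarrow> (nat \<Rightarrow> nat \<Rightarrow> real) set" where
  "feas n d = {x. \<forall>j<d. (\<Sum>i<n. (x j i)\<^sup>2) = 1}"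
definition tG :: "nat \<Rightarrow> nat \<Rightarrow> (nat list \<Rightarrow> real) \<Rightarrow> (nat \<Rightarrow> nat \<Rightarrow> real) \<Rightarrow> nat \<Rightarrow> real" where
  "tG n m A y = (\<lambda>k. \<Sum>ps\<in>tidx n m. (\<Prod>j<m. y j (ps ! j)) * A (ps @ [k]))"

lemma spec_alt: "spec_norm n d A = Sup (tform n d A ` feas n d)"
  by (simp add: spec_norm_def tform_def feas_def)

lemma tidx_eq: "tidx n d = {xs. set xs \<subseteq> {..<n} \<and> length xs = d}"
  by (auto simp: tidx_def)

lemma finite_tidx: "finite (tidx n d)"
  unfolding tidx_eq by (rule finite_lists_length_eq) simp

lemma tidx_0: "tidx n 0 = {[]}"
  by (auto simp: tidx_def)

lemma tidx_snoc: "tidx n (Suc m) = (\<lambda>(ps,k). ps @ [k]) ` (tidx n m \<times> {..<n})"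
proof
  show "tidx n (Suc m) \<subseteq> (\<lambda>(ps,k). ps @ [k]) ` (tidx n m \<times> {..<n})"
  proof
    fix ix assume h: "ix \<in> tidx n (Suc m)"
    then have "ix \<noteq> []" by (auto simp: tidx_def)
    then obtain ps k where e: "ix = ps @ [k]" by (metis rev_exhaust)
    with h have "ps \<in> tidx n m" "k < n" by (auto simp: tidx_def)
    with e show "ix \<in> (\<lambda>(ps,k). ps @ [k]) ` (tidx n m \<times> {..<n})" by auto
  qed
  show "(\<lambda>(ps,k). ps @ [k]) ` (tidx n m \<times> {..<n}) \<subseteq> tidx n (Suc m)"
    by (auto simp: tidx_def)
qed

lemma tidx_cons: "tidx n (Suc m) = (\<lambda>(i,ps). i # ps) ` ({..<n} \<times> tidx n m)"
proof
  show "tidx n (Suc m) \<subseteq> (\<lambda>(i,ps). i # ps) ` ({..<n} \<times> tidx n m)"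
  proof
    fix ix assume h: "ix \<in> tidx n (Suc m)"
    then obtain k ps where e: "ix = k # ps" by (cases "ix") (auto simp: tidx_def)
    with h have "ps \<in> tidx n m" "k < n" by (auto simp: tidx_def)
    with e show "ix \<in> (\<lambda>(i,ps). i # ps) ` ({..<n} \<times> tidx n m)" by auto
  qed
  show "(\<lambda>(i,ps). i # ps) ` ({..<n} \<times> tidx n m) \<subseteq> tidx n (Suc m)"
    by (auto simp: tidx_def)
qed

lemma sum_tidx_snoc: "(\<Sum>ix\<in>tidx n (Suc m). f ix) = (\<Sum>ps\<in>tidx n m. \<Sum>k<n. f (ps @ [k]))"
proof -
  have inj: "inj_on (\<lambda>(ps,k). ps @ [k]) (tidx n m \<times> {..<n})"
    by (auto simp: inj_on_def)
  show ?thesis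
    unfolding tidx_snoc sum.reindex[OF inj]
    by (simp add: sum.cartesian_product case_prod_unfold)
qed

lemma sum_tidx_cons: "(\<Sum>ix\<in>tidx n (Suc m). f ix) = (\<Sum>i<n. \<Sum>ps\<in>tidx n m. f (i # ps))"
proof -
  have inj: "inj_on (\<lambda>(i,ps). i # ps) ({..<n} \<times> tidx n m)"
    by (auto simp: inj_on_def)
  show ?thesis
    unfolding tidx_cons sum.reindex[OF inj]
    by (simp add: sum.cartesian_product case_prod_unfold)
qed

lemma card_tidx: "card (tidx n m) = n ^ m"
proof (induction m)
  case 0 then show ?case by (simp add: tidx_0)
next
  case (Suc m)
  have inj: "inj_on (\<lambda>(ps,k). ps @ [k]) (tidx n m \<times> {..<n})"
    by (auto simp: inj_on_def)
  show ?case unfolding tidx_snoc card_image[OF inj]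
    by (simp add: card_cartesian_product Suc)
qed

lemma tidx_nth: "ps \<in> tidx n m \<Longrightarrow> j < m \<Longrightarrow> ps ! j < n"
  by (auto simp: tidx_def)

lemma tidx_len: "ps \<in> tidx n m \<Longrightarrow> length ps = m"
  by (auto simp: tidx_def)

lemma snoc_in: "ps \<in> tidx n m \<Longrightarrow> k < n \<Longrightarrow> ps @ [k] \<in> tidx n (Suc m)"
  by (auto simp: tidx_def)

lemma tform_G: "tform n (Suc m) A x = (\<Sum>k<n. x m k * tG n m A x k)"
proof -
  have "tform n (Suc m) A x = (\<Sum>ps\<in>tidx n m. \<Sum>k<n. A (ps @ [k]) * ((\<Prod>j<m. x j (ps ! j)) * x m k))"
    unfolding tform_def sum_tidx_snoc
  proof (intro sum.cong refl)
    fix ps k assume ps: "ps \<in> tidx n m"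
    have l: "length ps = m" using ps by (rule tidx_len)
    have "(\<Prod>j<Suc m. x j ((ps @ [k]) ! j)) = (\<Prod>j<m. x j ((ps @ [k]) ! j)) * x m ((ps @ [k]) ! m)"
      by simp
    also have "\<dots> = (\<Prod>j<m. x j (ps ! j)) * x m k"
      using l by (simp add: nth_append)
    finally show "A (ps @ [k]) * (\<Prod>j<Suc m. x j ((ps @ [k]) ! j)) = A (ps @ [k]) * ((\<Prod>j<m. x j (ps ! j)) * x m k)"
      by simp
  qed
  also have "\<dots> = (\<Sum>k<n. \<Sum>ps\<in>tidx n m. x m k * ((\<Prod>j<m. x j (ps ! j)) * A (ps @ [k])))"
    by (subst sum.swap) (simp add: algebra_simps)
  also have "\<dots> = (\<Sum>k<n. x m k * tG n m A x k)"
    by (simp add: tG_def sum_distrib_left)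
  finally show ?thesis .
qed

lemma tG_local: "(\<And>j. j < m \<Longrightarrow> y j = y' j) \<Longrightarrow> tG n m A y = tG n m A y'"
  unfolding tG_def by (intro ext sum.cong refl arg_cong2[where f="(*)"] prod.cong) auto

lemma feas_abs: "x \<in> feas n d \<Longrightarrow> j < d \<Longrightarrow> i < n \<Longrightarrow> \<bar>x j i\<bar> \<le> 1"
proof -
  assume x: "x \<in> feas n d" and j: "j < d" and i: "i < n"
  have "(x j i)\<^sup>2 \<le> (\<Sum>i<n. (x j i)\<^sup>2)"
    by (rule member_le_sum[where f="\<lambda>i. (x j i)\<^sup>2"]) (use i in auto)
  also have "\<dots> = 1" using x j by (simp add: feas_def)
  finally show ?thesis by (simp add: abs_square_le_1)
qed

lemma tform_bound: "x \<in> feas n d \<Longrightarrow> tform n d A x \<le> (\<Sum>ix\<in>tidx n d. \<bar>A ix\<bar>)"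
proof -
  assume x: "x \<in> feas n d"
  have "tform n d A x \<le> (\<Sum>ix\<in>tidx n d. \<bar>A ix * (\<Prod>j<d. x j (ix ! j))\<bar>)"
    unfolding tform_def by (rule order_trans[OF abs_ge_self sum_abs])
  also have "\<dots> \<le> (\<Sum>ix\<in>tidx n d. \<bar>A ix\<bar>)"
  proof (rule sum_mono)
    fix ix assume ix: "ix \<in> tidx n d"
    have "(\<Prod>j<d. \<bar>x j (ix ! j)\<bar>) \<le> 1"
      using ix x feas_abs tidx_nth by (intro prod_le_1) auto
    then show "\<bar>A ix * (\<Prod>j<d. x j (ix ! j))\<bar> \<le> \<bar>A ix\<bar>"
      by (simp add: abs_mult abs_prod mult_left_le)
  qed
  finally show ?thesis .
qed

lemma bdd_tform: "bdd_above (tform n d A ` feas n d)"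
  by (rule bdd_aboveI[where M="\<Sum>ix\<in>tidx n d. \<bar>A ix\<bar>"]) (auto intro: tform_bound)

lemma spec_ge: "x \<in> feas n d \<Longrightarrow> tform n d A x \<le> spec_norm n d A"
  unfolding spec_alt by (rule cSup_upper) (auto intro: bdd_tform)

lemma spec_le: "feas n d \<noteq> {} \<Longrightarrow> (\<And>x. x \<in> feas n d \<Longrightarrow> tform n d A x \<le> c) \<Longrightarrow> spec_norm n d A \<le> c"
  unfolding spec_alt by (rule cSup_least) auto

lemma tnrm_tev: "i < n \<Longrightarrow> tnrm n (tev i) = 1"
proof -
  assume i: "i < n"
  have "tnrm n (tev i) = (\<Sum>k<n. if k = i then 1 else 0)"
    unfolding tnrm_def tev_def by (intro sum.cong) auto
  also have "\<dots> = 1" using i by simp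
  finally show ?thesis .
qed

lemma tnrm_nonneg: "0 \<le> tnrm n v"
  by (simp add: tnrm_def sum_nonneg)

lemma feas_ne: "0 < n \<Longrightarrow> feas n d \<noteq> {}"
proof -
  assume n: "0 < n"
  have "(\<lambda>j. tev 0) \<in> feas n d"
    using tnrm_tev[OF n] by (simp add: feas_def tnrm_def)
  then show ?thesis by blast
qed



lemma spec_nonneg:
  assumes n: "0 < n" shows "0 \<le> spec_norm n (Suc m) A"
proof -
  define x where "x = (\<lambda>j::nat. tev 0)"
  define x' where "x' = x(m := (\<lambda>i. - x m i))"
  have fx: "x \<in> feas n (Suc m)" using tnrm_tev[OF n] by (simp add: feas_def tnrm_def x_def)
  have fx': "x' \<in> feas n (Suc m)" using fx by (auto simp: feas_def x'_def)
  have G: "tG n m A x' = tG n m A x" by (rule tG_local) (simp add: x'_def)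
  have "tform n (Suc m) A x' = - tform n (Suc m) A x"
    unfolding tform_G G by (simp add: x'_def sum_negf)
  with spec_ge[OF fx, of A] spec_ge[OF fx', of A] show ?thesis by linarith
qed

lemma fiber_bound:
  assumes y: "\<And>j. j < m \<Longrightarrow> tnrm n (y j) = 1"
  shows "tnrm n (tG n m A y) \<le> (spec_norm n (Suc m) A)\<^sup>2"
proof (cases "tnrm n (tG n m A y) = 0")
  case True then show ?thesis by simp
next
  case False
  define g where "g = tG n m A y"
  define ng where "ng = tnrm n g"
  have ngp: "0 < ng" using False tnrm_nonneg[of n g] by (simp add: ng_def g_def)
  define w where "w = (\<lambda>k. g k / sqrt ng)"
  define x where "x = y(m := w)"
  have "(\<Sum>i<n. (w i)\<^sup>2) = (\<Sum>i<n. (g i)\<^sup>2 / ng)"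
    using ngp by (simp add: w_def power_divide)
  also have "\<dots> = 1" using ngp by (simp add: sum_divide_distrib[symmetric] ng_def tnrm_def)
  finally have wn: "(\<Sum>i<n. (w i)\<^sup>2) = 1" .
  have fx: "x \<in> feas n (Suc m)"
    unfolding feas_def
  proof (safe)
    fix j assume "j < Suc m"
    then show "(\<Sum>i<n. (x j i)\<^sup>2) = 1"
      using y[of j] wn by (cases "j = m") (auto simp: x_def tnrm_def)
  qed
  have G: "tG n m A x = g" unfolding g_def by (rule tG_local) (simp add: x_def)
  have "tform n (Suc m) A x = (\<Sum>k<n. g k * g k / sqrt ng)"
    unfolding tform_G G by (simp add: x_def w_def)
  also have "\<dots> = ng / sqrt ng"
    by (simp add: sum_divide_distrib[symmetric] ng_def tnrm_def power2_eq_square)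
  also have "\<dots> = sqrt ng" using ngp by (simp add: real_div_sqrt)
  finally have "sqrt ng \<le> spec_norm n (Suc m) A" using spec_ge[OF fx, of A] by simp
  then have "(sqrt ng)\<^sup>2 \<le> (spec_norm n (Suc m) A)\<^sup>2"
    using ngp by (intro power_mono) auto
  then show ?thesis using ngp by (simp add: ng_def g_def)
qed

lemma prod_tev: 
  assumes "ps \<in> tidx n m" "qs \<in> tidx n m"
  shows "(\<Prod>j<m. tev (ps ! j) (qs ! j)) = (if qs = ps then 1 else 0)"
proof (cases "qs = ps")
  case True then show ?thesis by (simp add: tev_def)
next
  case False
  have "length qs = m" "length ps = m" using assms tidx_len by auto
  with False obtain j where j: "j < m" "qs ! j \<noteq> ps ! j"
    using nth_equalityI by metis
  then have "(\<Prod>j<m. tev (ps ! j) (qs ! j)) = 0"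
    by (intro prod_zero) (auto simp: tev_def)
  with False show ?thesis by simp
qed

lemma tG_basis:
  assumes ps: "ps \<in> tidx n m"
  shows "tG n m A (\<lambda>j. tev (ps ! j)) k = A (ps @ [k])"
proof -
  have "tG n m A (\<lambda>j. tev (ps ! j)) k = (\<Sum>qs\<in>tidx n m. if qs = ps then A (qs @ [k]) else 0)"
    unfolding tG_def using ps by (intro sum.cong) (auto simp: prod_tev)
  also have "\<dots> = A (ps @ [k])" using ps finite_tidx by simp
  finally show ?thesis .
qed

lemma fiber_le:
  assumes ps: "ps \<in> tidx n m"
  shows "tnrm n (\<lambda>k. A (ps @ [k])) \<le> (spec_norm n (Suc m) A)\<^sup>2"
proof -
  have "tnrm n (tG n m A (\<lambda>j. tev (ps ! j))) \<le> (spec_norm n (Suc m) A)\<^sup>2"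
    by (rule fiber_bound) (use ps tidx_nth tnrm_tev in auto)
  moreover have "tG n m A (\<lambda>j. tev (ps ! j)) = (\<lambda>k. A (ps @ [k]))"
    using tG_basis[OF ps] by auto
  ultimately show ?thesis by simp
qed

lemma frob_sq: "(frob_norm n (Suc m) A)\<^sup>2 = (\<Sum>ps\<in>tidx n m. tnrm n (\<lambda>k. A (ps @ [k])))"
  unfolding frob_norm_def by (simp add: sum_nonneg sum_tidx_snoc tnrm_def)

lemma frob_lower:
  "(frob_norm n (Suc m) A)\<^sup>2 \<le> real (n ^ m) * (spec_norm n (Suc m) A)\<^sup>2"
proof -
  have "(frob_norm n (Suc m) A)\<^sup>2 \<le> (\<Sum>ps\<in>tidx n m. (spec_norm n (Suc m) A)\<^sup>2)"
    unfolding frob_sq by (intro sum_mono fiber_le)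
  also have "\<dots> = real (n ^ m) * (spec_norm n (Suc m) A)\<^sup>2"
    by (simp add: card_tidx)
  finally show ?thesis .
qed

lemma frob_pos:
  assumes "A \<in> tensors n d" "A \<noteq> (\<lambda>_. 0)"
  shows "0 < frob_norm n d A"
proof -
  obtain ix where a: "A ix \<noteq> 0" using assms(2) by auto
  then have ix: "ix \<in> tidx n d" using assms(1) by (auto simp: tensors_def)
  have "0 < (A ix)\<^sup>2" using a by simp
  also have "\<dots> \<le> (\<Sum>ix\<in>tidx n d. (A ix)\<^sup>2)"
    by (rule member_le_sum) (use ix finite_tidx in auto)
  finally show ?thesis unfolding frob_norm_def by simp
qed

lemma ratio_lower:
  assumes n: "0 < n" and A: "A \<in> tensors n (Suc m)" "A \<noteq> (\<lambda>_. 0)"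
  shows "1 / sqrt (n ^ m) \<le> spec_norm n (Suc m) A / frob_norm n (Suc m) A"
proof -
  let ?s = "spec_norm n (Suc m) A" and ?F = "frob_norm n (Suc m) A"
  have F: "0 < ?F" by (rule frob_pos[OF A])
  have s: "0 \<le> ?s" by (rule spec_nonneg[OF n])
  have "?F\<^sup>2 \<le> (sqrt (n ^ m) * ?s)\<^sup>2"
    using frob_lower[of n m A] by (simp add: power_mult_distrib)
  then have "?F \<le> sqrt (n ^ m) * ?s"
    by (rule power2_le_imp_le) (use s in simp)
  moreover have "0 < sqrt (real n ^ m)" using n by simp
  ultimately show ?thesis using F by (simp add: divide_le_eq field_simps)
qed



definition tabx :: "nat list list" where "tabx = [[0,1,2,3,4,5,6,7], [1,0,3,2,5,4,7,6], [2,3,0,1,6,7,4,5], [3,2,1,0,7,6,5,4], [4,5,6,7,0,1,2,3], [5,4,7,6,1,0,3,2], [6,7,4,5,2,3,0,1], [7,6,5,4,3,2,1,0]]"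
definition tabs :: "real list list" where "tabs = [[1,1,1,1,1,1,1,1], [1,-1,1,-1,1,-1,-1,1], [1,-1,-1,1,1,1,-1,-1], [1,1,-1,-1,1,-1,1,-1], [1,-1,-1,-1,-1,1,1,1], [1,1,-1,1,-1,-1,-1,1], [1,1,1,-1,-1,1,-1,-1], [1,-1,1,1,-1,-1,1,-1]]"
definition OC :: "nat \<Rightarrow> nat \<Rightarrow> nat \<Rightarrow> real" where
  "OC i j k = (if k = tabx ! i ! j then tabs ! i ! j else 0)"
definition mulC :: "nat \<Rightarrow> (nat\<Rightarrow>nat\<Rightarrow>nat\<Rightarrow>real) \<Rightarrow> (nat\<Rightarrow>real) \<Rightarrow> (nat\<Rightarrow>real) \<Rightarrow> (nat\<Rightarrow>real)" where
  "mulC n C x y = (\<lambda>k. \<Sum>i<n. \<Sum>j<n. x i * y j * C i j k)"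
lemma lt8: "{..<8::nat} = {0,1,2,3,4,5,6,7}" by auto
lemma lt4: "{..<4::nat} = {0,1,2,3}" by auto
lemma qc0: "mulC 4 OC x y 0 = (x 0 * y 0 - x 1 * y 1 - x 2 * y 2 - x 3 * y 3)"
  unfolding mulC_def lt4 OC_def tabx_def tabs_def by simp
lemma qc1: "mulC 4 OC x y 1 = (x 0 * y 1 + x 1 * y 0 + x 2 * y 3 - x 3 * y 2)"
  unfolding mulC_def lt4 OC_def tabx_def tabs_def by simp
lemma qc2: "mulC 4 OC x y 2 = (x 0 * y 2 - x 1 * y 3 + x 2 * y 0 + x 3 * y 1)"
  unfolding mulC_def lt4 OC_def tabx_def tabs_def by simp
lemma qc3: "mulC 4 OC x y 3 = (x 0 * y 3 + x 1 * y 2 - x 2 * y 1 + x 3 * y 0)"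
  unfolding mulC_def lt4 OC_def tabx_def tabs_def by simp
lemma nrm4_expand: "tnrm 4 v = (v 0)\<^sup>2 + (v 1)\<^sup>2 + (v 2)\<^sup>2 + (v 3)\<^sup>2"
  by (simp add: tnrm_def lt4)
lemma nrm4: "tnrm 4 (mulC 4 OC x y) = tnrm 4 x * tnrm 4 y"
  unfolding nrm4_expand qc0 qc1 qc2 qc3 by algebra
lemma eight_sq: fixes a0 b0 a1 b1 a2 b2 a3 b3 a4 b4 a5 b5 a6 b6 a7 b7 :: real
  shows "(a0 * b0 - a1 * b1 - a2 * b2 - a3 * b3 - a4 * b4 - a5 * b5 - a6 * b6 - a7 * b7)\<^sup>2 + (a0 * b1 + a1 * b0 + a2 * b3 - a3 * b2 + a4 * b5 - a5 * b4 - a6 * b7 + a7 * b6)\<^sup>2 + (a0 * b2 - a1 * b3 + a2 * b0 + a3 * b1 + a4 * b6 + a5 * b7 - a6 * b4 - a7 * b5)\<^sup>2 + (a0 * b3 + a1 * b2 - a2 * b1 + a3 * b0 + a4 * b7 - a5 * b6 + a6 * b5 - a7 * b4)\<^sup>2 + (a0 * b4 - a1 * b5 - a2 * b6 - a3 * b7 + a4 * b0 + a5 * b1 + a6 * b2 + a7 * b3)\<^sup>2 + (a0 * b5 + a1 * b4 - a2 * b7 + a3 * b6 - a4 * b1 + a5 * b0 - a6 * b3 + a7 * b2)\<^sup>2 + (a0 * b6 + a1 * b7 + a2 * b4 - a3 * b5 - a4 * b2 + a5 * b3 + a6 * b0 - a7 * b1)\<^sup>2 + (a0 * b7 - a1 *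 b6 + a2 * b5 + a3 * b4 - a4 * b3 - a5 * b2 + a6 * b1 + a7 * b0)\<^sup>2 = (a0\<^sup>2 + a1\<^sup>2 + a2\<^sup>2 + a3\<^sup>2 + a4\<^sup>2 + a5\<^sup>2 + a6\<^sup>2 + a7\<^sup>2) * (b0\<^sup>2 + b1\<^sup>2 + b2\<^sup>2 + b3\<^sup>2 + b4\<^sup>2 + b5\<^sup>2 + b6\<^sup>2 + b7\<^sup>2)"
  by algebra
lemma oc0: "mulC 8 OC x y 0 = (x 0 * y 0 - x 1 * y 1 - x 2 * y 2 - x 3 * y 3 - x 4 * y 4 - x 5 * y 5 - x 6 * y 6 - x 7 * y 7)"
  unfolding mulC_def lt8 OC_def tabx_def tabs_def by simp
lemma oc1: "mulC 8 OC x y 1 = (x 0 * y 1 + x 1 * y 0 + x 2 * y 3 - x 3 * y 2 + x 4 * y 5 - x 5 * y 4 - x 6 * y 7 + x 7 * y 6)"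
  unfolding mulC_def lt8 OC_def tabx_def tabs_def by simp
lemma oc2: "mulC 8 OC x y 2 = (x 0 * y 2 - x 1 * y 3 + x 2 * y 0 + x 3 * y 1 + x 4 * y 6 + x 5 * y 7 - x 6 * y 4 - x 7 * y 5)"
  unfolding mulC_def lt8 OC_def tabx_def tabs_def by simp
lemma oc3: "mulC 8 OC x y 3 = (x 0 * y 3 + x 1 * y 2 - x 2 * y 1 + x 3 * y 0 + x 4 * y 7 - x 5 * y 6 + x 6 * y 5 - x 7 * y 4)"
  unfolding mulC_def lt8 OC_def tabx_def tabs_def by simp
lemma oc4: "mulC 8 OC x y 4 = (x 0 * y 4 - x 1 * y 5 - x 2 * y 6 - x 3 * y 7 + x 4 * y 0 + x 5 * y 1 + x 6 * y 2 + x 7 * y 3)"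
  unfolding mulC_def lt8 OC_def tabx_def tabs_def by simp
lemma oc5: "mulC 8 OC x y 5 = (x 0 * y 5 + x 1 * y 4 - x 2 * y 7 + x 3 * y 6 - x 4 * y 1 + x 5 * y 0 - x 6 * y 3 + x 7 * y 2)"
  unfolding mulC_def lt8 OC_def tabx_def tabs_def by simp
lemma oc6: "mulC 8 OC x y 6 = (x 0 * y 6 + x 1 * y 7 + x 2 * y 4 - x 3 * y 5 - x 4 * y 2 + x 5 * y 3 + x 6 * y 0 - x 7 * y 1)"
  unfolding mulC_def lt8 OC_def tabx_def tabs_def by simp
lemma oc7: "mulC 8 OC x y 7 = (x 0 * y 7 - x 1 * y 6 + x 2 * y 5 + x 3 * y 4 - x 4 * y 3 - x 5 * y 2 + x 6 * y 1 + x 7 * y 0)"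
  unfolding mulC_def lt8 OC_def tabx_def tabs_def by simp
lemma nrm8_expand: "tnrm 8 v = (v 0)\<^sup>2 + (v 1)\<^sup>2 + (v 2)\<^sup>2 + (v 3)\<^sup>2 + (v 4)\<^sup>2 + (v 5)\<^sup>2 + (v 6)\<^sup>2 + (v 7)\<^sup>2"
  by (simp add: tnrm_def lt8)
lemma nrm8: "tnrm 8 (mulC 8 OC x y) = tnrm 8 x * tnrm 8 y"
  unfolding nrm8_expand oc0 oc1 oc2 oc3 oc4 oc5 oc6 oc7
  by (rule eight_sq)



fun Pr :: "((nat\<Rightarrow>real) \<Rightarrow> (nat\<Rightarrow>real) \<Rightarrow> (nat\<Rightarrow>real)) \<Rightarrow> (nat\<Rightarrow>real) list \<Rightarrow> (nat\<Rightarrow>real)" where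
  "Pr mul [] = (\<lambda>_. 0)"
| "Pr mul [x] = x"
| "Pr mul (x # y # xs) = mul x (Pr mul (y # xs))"

lemma Pr_cons: "xs \<noteq> [] \<Longrightarrow> Pr mul (x # xs) = mul x (Pr mul xs)"
  by (cases xs) auto

lemma mulC_tev: "i < n \<Longrightarrow> mulC n C (tev i) v k = (\<Sum>j<n. v j * C i j k)"
proof -
  assume i: "i < n"
  have "mulC n C (tev i) v k = (\<Sum>i'<n. if i' = i then (\<Sum>j<n. v j * C i j k) else 0)"
    unfolding mulC_def tev_def by (intro sum.cong) (auto simp: sum_distrib_left)
  also have "\<dots> = (\<Sum>j<n. v j * C i j k)" using i by simp
  finally show ?thesis .
qed

lemma map_upt_Suc0: "map x [0..<Suc (Suc m)] = x 0 # map (\<lambda>j. x (Suc j)) [0..<Suc m]"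
  by (induction m) auto

lemma expand:
  "k < n \<Longrightarrow> (\<Sum>ps\<in>tidx n (Suc m). (\<Prod>j<Suc m. x j (ps ! j)) * Pr (mulC n C) (map tev ps) k)
     = Pr (mulC n C) (map x [0..<Suc m]) k"
proof (induction m arbitrary: x k)
  case 0
  have "(\<Sum>ps\<in>tidx n (Suc 0). (\<Prod>j<Suc 0. x j (ps ! j)) * Pr (mulC n C) (map tev ps) k)
      = (\<Sum>i<n. if i = k then x 0 k else 0)"
    unfolding sum_tidx_cons tidx_0 by (intro sum.cong) (auto simp: tev_def)
  also have "\<dots> = x 0 k" using 0 by simp
  finally show ?case by simp
next
  case (Suc m)
  let ?x' = "\<lambda>j. x (Suc j)"
  let ?P = "Pr (mulC n C)"
  have "(\<Sum>ps\<in>tidx n (Suc (Suc m)). (\<Prod>j<Suc (Suc m). x j (ps ! j)) * ?P (map tev ps) k)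
     = (\<Sum>i<n. \<Sum>ps\<in>tidx n (Suc m). (x 0 i * (\<Prod>j<Suc m. ?x' j (ps ! j))) * (\<Sum>j<n. ?P (map tev ps) j * C i j k))"
    unfolding sum_tidx_cons[of _ n "Suc m"]
  proof (rule sum.cong[OF refl], rule sum.cong[OF refl])
    fix i ps assume i: "i \<in> {..<n}" and ps: "ps \<in> tidx n (Suc m)"
    have ne: "map tev ps \<noteq> []" using tidx_len[OF ps] by auto
    have "(\<Prod>j<Suc (Suc m). x j ((i # ps) ! j)) = x 0 i * (\<Prod>j<Suc m. ?x' j (ps ! j))"
      unfolding prod.lessThan_Suc_shift by simp
    moreover have "?P (map tev (i # ps)) k = (\<Sum>j<n. ?P (map tev ps) j * C i j k)"
      using ne i by (simp add: Pr_cons mulC_tev)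
    ultimately show "(\<Prod>j<Suc (Suc m). x j ((i # ps) ! j)) * ?P (map tev (i # ps)) k
       = (x 0 i * (\<Prod>j<Suc m. ?x' j (ps ! j))) * (\<Sum>j<n. ?P (map tev ps) j * C i j k)" by simp
  qed
  also have "\<dots> = (\<Sum>i<n. x 0 i * (\<Sum>j<n. C i j k * (\<Sum>ps\<in>tidx n (Suc m). (\<Prod>j<Suc m. ?x' j (ps ! j)) * ?P (map tev ps) j)))"
    by (simp add: sum_distrib_left sum_distrib_right algebra_simps sum.swap[of _ "tidx n (Suc m)"])
  also have "\<dots> = (\<Sum>i<n. x 0 i * (\<Sum>j<n. C i j k * ?P (map ?x' [0..<Suc m]) j))"
  proof -
    have IH': "\<And>j. j < n \<Longrightarrow> (\<Sum>ps\<in>tidx n (Suc m). (\<Prod>j<Suc m. ?x' j (ps ! j)) * ?P (map tev ps) j) = ?P (map ?x' [0..<Suc m]) j"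
      by (rule Suc.IH)
    show ?thesis by (intro sum.cong refl arg_cong2[where f="(*)"] IH') auto
  qed
  also have "\<dots> = mulC n C (x 0) (?P (map ?x' [0..<Suc m])) k"
    by (simp add: mulC_def sum_distrib_left algebra_simps)
  also have "\<dots> = ?P (map x [0..<Suc (Suc m)]) k"
    unfolding map_upt_Suc0 by (subst Pr_cons) auto
  finally show ?case .
qed

lemma Pr_nrm:
  assumes hm: "\<And>x y. tnrm n (mul x y) = tnrm n x * tnrm n y"
  shows "xs \<noteq> [] \<Longrightarrow> (\<And>v. v \<in> set xs \<Longrightarrow> tnrm n v = 1) \<Longrightarrow> tnrm n (Pr mul xs) = 1"
proof (induction xs)
  case Nil then show ?case by simp
next
  case (Cons x xs)
  then show ?case by (cases "xs = []") (auto simp: Pr_cons hm)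
qed

definition OT :: "nat \<Rightarrow> nat \<Rightarrow> nat list \<Rightarrow> real" where
  "OT n d = (\<lambda>ix. if ix \<in> tidx n d then Pr (mulC n OC) (map tev (butlast ix)) (last ix) else 0)"

lemma OT_snoc: "ps \<in> tidx n m \<Longrightarrow> k < n \<Longrightarrow> OT n (Suc m) (ps @ [k]) = Pr (mulC n OC) (map tev ps) k"
  by (simp add: OT_def snoc_in)

lemma OT_tensor: "OT n d \<in> tensors n d"
  by (simp add: OT_def tensors_def)

lemma tnrm_cong: "(\<And>k. k < n \<Longrightarrow> v k = w k) \<Longrightarrow> tnrm n v = tnrm n w"
  unfolding tnrm_def by (intro sum.cong) auto

context
  fixes n :: nat
  assumes hm: "\<And>x y. tnrm n (mulC n OC x y) = tnrm n x * tnrm n y"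
      and n: "0 < n"
begin

lemma OT_frob: "frob_norm n (Suc (Suc m)) (OT n (Suc (Suc m))) = sqrt (real n ^ Suc m)"
proof -
  have "(frob_norm n (Suc (Suc m)) (OT n (Suc (Suc m))))\<^sup>2 = (\<Sum>ps\<in>tidx n (Suc m). 1)"
    unfolding frob_sq
  proof (intro sum.cong refl)
    fix ps assume ps: "ps \<in> tidx n (Suc m)"
    have "tnrm n (\<lambda>k. OT n (Suc (Suc m)) (ps @ [k])) = tnrm n (Pr (mulC n OC) (map tev ps))"
      by (rule tnrm_cong) (simp add: OT_snoc ps)
    also have "\<dots> = 1"
      using ps unfolding tidx_def by (intro Pr_nrm[OF hm]) (auto intro!: tnrm_tev)
    finally show "tnrm n (\<lambda>k. OT n (Suc (Suc m)) (ps @ [k])) = 1" .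
  qed
  also have "\<dots> = real n ^ Suc m" by (simp add: card_tidx)
  finally have "(frob_norm n (Suc (Suc m)) (OT n (Suc (Suc m))))\<^sup>2 = real n ^ Suc m" .
  moreover have "0 \<le> frob_norm n (Suc (Suc m)) (OT n (Suc (Suc m)))"
    by (simp add: frob_norm_def sum_nonneg)
  ultimately show ?thesis by (metis real_sqrt_unique)
qed

lemma OT_spec: "spec_norm n (Suc (Suc m)) (OT n (Suc (Suc m))) \<le> 1"
proof (rule spec_le[OF feas_ne[OF n]])
  fix x assume x: "x \<in> feas n (Suc (Suc m))"
  let ?P = "Pr (mulC n OC) (map x [0..<Suc m])"
  have G: "tG n (Suc m) (OT n (Suc (Suc m))) x k = ?P k" if k: "k < n" for k
    unfolding tG_def
    by (subst expand[OF k, symmetric]) (intro sum.cong refl, simp add: OT_snoc k)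
  have P1: "tnrm n ?P = 1"
    by (rule Pr_nrm[OF hm]) (use x in \<open>auto simp: feas_def tnrm_def\<close>)
  have x1: "(\<Sum>k<n. (x (Suc m) k)\<^sup>2) = 1" using x by (simp add: feas_def)
  have "tform n (Suc (Suc m)) (OT n (Suc (Suc m))) x = (\<Sum>k<n. x (Suc m) k * ?P k)"
    unfolding tform_G by (intro sum.cong) (auto simp: G)
  also have "\<dots> \<le> (\<Sum>k<n. ((x (Suc m) k)\<^sup>2 + (?P k)\<^sup>2) / 2)"
  proof (rule sum_mono)
    fix k
    have "0 \<le> (x (Suc m) k - ?P k)\<^sup>2" by simp
    then show "x (Suc m) k * ?P k \<le> ((x (Suc m) k)\<^sup>2 + (?P k)\<^sup>2) / 2"
      by (simp add: power2_eq_square algebra_simps)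
  qed
  also have "\<dots> = 1"
    using x1 P1 by (simp add: sum_divide_distrib[symmetric] sum.distrib tnrm_def)
  finally show "tform n (Suc (Suc m)) (OT n (Suc (Suc m))) x \<le> 1" .
qed

lemma OT_nz: "OT n (Suc (Suc m)) \<noteq> (\<lambda>_. 0)"
proof
  assume "OT n (Suc (Suc m)) = (\<lambda>_. 0)"
  then have "frob_norm n (Suc (Suc m)) (OT n (Suc (Suc m))) = 0" by (simp add: frob_norm_def)
  with OT_frob[of m] n show False by simp
qed

lemma best_tensors:
  "best_r1_ratio n (Suc (Suc m)) (tensors n (Suc (Suc m))) = 1 / sqrt (real n ^ Suc m)"
proof -
  let ?d = "Suc (Suc m)"
  let ?S = "(\<lambda>A. spec_norm n ?d A / frob_norm n ?d A) ` (tensors n ?d - {\<lambda>_. 0})"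
  have mem: "OT n ?d \<in> tensors n ?d - {\<lambda>_. 0}" using OT_tensor OT_nz by auto
  have low: "1 / sqrt (real n ^ Suc m) \<le> r" if r: "r \<in> ?S" for r
  proof -
    obtain A where A: "A \<in> tensors n ?d" "A \<noteq> (\<lambda>_. 0)" and rA: "r = spec_norm n ?d A / frob_norm n ?d A"
      using r by auto
    show ?thesis using ratio_lower[OF n A] rA by simp
  qed
  have "Inf ?S \<le> spec_norm n ?d (OT n ?d) / frob_norm n ?d (OT n ?d)"
    apply (rule cInf_lower)
    using mem apply blast
    apply (rule bdd_belowI[where m="1 / sqrt (real n ^ Suc m)"])
    using low by blast
  also have "\<dots> \<le> 1 / sqrt (real n ^ Suc m)"
    unfolding OT_frob using OT_spec[of m] n by (simp add: divide_right_mono)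
  finally have "Inf ?S \<le> 1 / sqrt (real n ^ Suc m)" .
  moreover have "1 / sqrt (real n ^ Suc m) \<le> Inf ?S"
    by (rule cInf_greatest) (use mem low in auto)
  ultimately show ?thesis unfolding best_r1_ratio_def by linarith
qed

end



definition pre :: "nat \<Rightarrow> nat \<Rightarrow> nat \<Rightarrow> nat list" where
  "pre m a b = a # b # replicate (m - 2) 0"

definition yb :: "nat \<Rightarrow> nat \<Rightarrow> nat \<Rightarrow> nat \<Rightarrow> nat \<Rightarrow> real" where
  "yb m a b = (\<lambda>j. tev (pre m a b ! j))"

lemma pre_in: "2 \<le> m \<Longrightarrow> a < n \<Longrightarrow> b < n \<Longrightarrow> pre m a b \<in> tidx n m"
  by (auto simp: pre_def tidx_def)

lemma pre_eq: "pre m a b = pre m a' b' \<longleftrightarrow> a = a' \<and> b = b'"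
  by (simp add: pre_def)

lemma yb_upd: "((yb m p p')(1 := tev b))(0 := tev a) = yb m a b"
  by (auto simp: yb_def pre_def fun_eq_iff nth_Cons split: nat.split)

lemma tG_lin:
  assumes j0: "j0 < m"
  shows "tG n m A (y(j0 := (\<lambda>i. a * v i + b * w i))) k
       = a * tG n m A (y(j0 := v)) k + b * tG n m A (y(j0 := w)) k"
proof -
  have P: "(\<Prod>j<m. (y(j0 := f)) j (ps ! j)) = f (ps ! j0) * (\<Prod>j\<in>{..<m}-{j0}. y j (ps ! j))" for f ps
  proof -
    have "(\<Prod>j<m. (y(j0 := f)) j (ps ! j)) = (y(j0 := f)) j0 (ps ! j0) * (\<Prod>j\<in>{..<m}-{j0}. (y(j0 := f)) j (ps ! j))"
      by (rule prod.remove) (use j0 in auto)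
    also have "(\<Prod>j\<in>{..<m}-{j0}. (y(j0 := f)) j (ps ! j)) = (\<Prod>j\<in>{..<m}-{j0}. y j (ps ! j))"
      by (rule prod.cong) auto
    finally show ?thesis by simp
  qed
  show ?thesis
    unfolding tG_def P
    by (simp add: sum.distrib sum_distrib_left algebra_simps)
qed

lemma sym_swap:
  assumes A: "A \<in> sym_tensors n (Suc m)" and m: "2 \<le> m" and pq: "p < n" "q < n" and k: "k < n"
  shows "A (pre m p q @ [k]) = A (pre m q p @ [k])"
proof -
  let ?ix = "pre m p q @ [k]"
  have ix: "?ix \<in> tidx n (Suc m)" by (rule snoc_in[OF pre_in[OF m pq] k])
  have perm: "Transposition.transpose 0 1 permutes {..<Suc m}" using m by (intro permutes_swap_id) auto
  have "A ?ix = A (map (\<lambda>i. ?ix ! Transposition.transpose 0 1 i) [0..<Suc m])"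
    using A ix perm by (auto simp: sym_tensors_def)
  also have "map (\<lambda>i. ?ix ! Transposition.transpose 0 1 i) [0..<Suc m] = pre m q p @ [k]"
  proof (rule nth_equalityI)
    show "length (map (\<lambda>i. ?ix ! Transposition.transpose 0 1 i) [0..<Suc m]) = length (pre m q p @ [k])"
      using m by (simp add: pre_def)
  next
    fix i assume "i < length (map (\<lambda>i. ?ix ! Transposition.transpose 0 1 i) [0..<Suc m])"
    then have i: "i < Suc m" by simp
    have e1: "map (\<lambda>i. ?ix ! Transposition.transpose 0 1 i) [0..<Suc m] ! i = ?ix ! Transposition.transpose 0 1 i"
      using i by (simp del: upt_Suc)
    have e2: "?ix = p # q # (replicate (m - 2) 0 @ [k])" "pre m q p @ [k] = q # p # (replicate (m - 2) 0 @ [k])"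
      by (simp_all add: pre_def)
    show "map (\<lambda>i. ?ix ! Transposition.transpose 0 1 i) [0..<Suc m] ! i = (pre m q p @ [k]) ! i"
      unfolding e1 unfolding e2 by (cases i; cases "i - 1") (auto simp: Transposition.transpose_def)
  qed
  finally show ?thesis .
qed

lemma tnrm_two:
  assumes "p < n" "q < n" "p \<noteq> q"
  shows "tnrm n (\<lambda>i. a * tev p i + b * tev q i) = a\<^sup>2 + b\<^sup>2"
proof -
  have "tnrm n (\<lambda>i. a * tev p i + b * tev q i) = (\<Sum>i<n. (if i = p then a\<^sup>2 else 0) + (if i = q then b\<^sup>2 else 0))"
    unfolding tnrm_def by (intro sum.cong) (use assms in \<open>auto simp: tev_def\<close>)
  also have "\<dots> = a\<^sup>2 + b\<^sup>2" using assms by (simp add: sum.distrib)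
  finally show ?thesis .
qed

lemma test_G:
  assumes m: "2 \<le> m" and pq: "p < n" "q < n"
  shows "tG n m A (((yb m p p)(0 := (\<lambda>i. c * tev p i + b * tev q i)))(1 := (\<lambda>i. c * tev p i + b * tev q i))) k
     = c * (c * A (pre m p p @ [k]) + b * A (pre m q p @ [k])) + b * (c * A (pre m p q @ [k]) + b * A (pre m q q @ [k]))"
proof -
  let ?u = "\<lambda>i. c * tev p i + b * tev q i"
  have bas: "tG n m A (((yb m p p)(1 := tev b'))(0 := tev a')) k = A (pre m a' b' @ [k])"
    if "a' < n" "b' < n" for a' b'
    unfolding yb_upd unfolding yb_def by (rule tG_basis[OF pre_in[OF m that]])
  have l0: "tG n m A (((yb m p p)(1 := tev b'))(0 := ?u)) k
      = c * A (pre m p b' @ [k]) + b * A (pre m q b' @ [k])" if "b' < n" for b'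
    using m tG_lin[of 0 m n A "(yb m p p)(1 := tev b')" c "tev p" b "tev q" k] bas[of p b'] bas[of q b'] pq that by simp
  have "tG n m A (((yb m p p)(0 := ?u))(1 := ?u)) k
      = c * tG n m A (((yb m p p)(0 := ?u))(1 := tev p)) k + b * tG n m A (((yb m p p)(0 := ?u))(1 := tev q)) k"
    using m by (simp add: tG_lin)
  also have "\<dots> = c * tG n m A (((yb m p p)(1 := tev p))(0 := ?u)) k + b * tG n m A (((yb m p p)(1 := tev q))(0 := ?u)) k"
    by (simp add: fun_upd_twist)
  also have "\<dots> = c * (c * A (pre m p p @ [k]) + b * A (pre m q p @ [k])) + b * (c * A (pre m p q @ [k]) + b * A (pre m q q @ [k]))"
    using l0 pq by simp
  finally show ?thesis .
qed



lemma pair_bound: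
  assumes A: "A \<in> sym_tensors n (Suc m)" and m: "2 \<le> m" and pq: "p < n" "q < n" "p \<noteq> q"
  shows "(\<Sum>k<n. (A (pre m p p @ [k]) + A (pre m q q @ [k]))\<^sup>2)
     \<le> 4 * ((spec_norm n (Suc m) A)\<^sup>2 - tnrm n (\<lambda>k. A (pre m p q @ [k])))"
proof -
  define c :: real where "c = sqrt (1/2)"
  have cc: "c * c = 1/2" by (simp add: c_def)
  let ?s = "spec_norm n (Suc m) A"
  let ?x = "\<lambda>k. A (pre m p p @ [k])" and ?y = "\<lambda>k. A (pre m p q @ [k])" and ?z = "\<lambda>k. A (pre m q q @ [k])"
  have sw: "A (pre m q p @ [k]) = ?y k" if "k < n" for k
    using sym_swap[OF A m pq(2,1) that] .
  have test: "(\<Sum>k<n. (c * (c * ?x k + b * ?y k) + b * (c * ?y k + b * ?z k))\<^sup>2) \<le> ?s\<^sup>2"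
    if b: "b\<^sup>2 = 1/2" for b
  proof -
    let ?u = "\<lambda>i. c * tev p i + b * tev q i"
    let ?Y = "((yb m p p)(0 := ?u))(1 := ?u)"
    have "tnrm n (tG n m A ?Y) \<le> ?s\<^sup>2"
    proof (rule fiber_bound)
      fix j assume j: "j < m"
      show "tnrm n (?Y j) = 1"
      proof (cases "j \<le> 1")
        case True
        then have "?Y j = ?u" by (cases j) auto
        then show ?thesis using tnrm_two[OF pq] b cc by (simp add: power2_eq_square)
      next
        case False
        then have "?Y j = tev (pre m p p ! j)" by (simp add: yb_def)
        moreover have "pre m p p ! j < n"
          using tidx_nth[OF pre_in[OF m pq(1) pq(1)] j] .
        ultimately show ?thesis by (simp add: tnrm_tev)
      qed
    qed
    moreover have "tnrm n (tG n m A ?Y) = (\<Sum>k<n. (c * (c * ?x k + b * ?y k) + b * (c * ?y k + b * ?z k))\<^sup>2)"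
      unfolding tnrm_def
    proof (intro sum.cong refl)
      fix k assume "k \<in> {..<n}"
      then show "(tG n m A ?Y k)\<^sup>2 = (c * (c * ?x k + b * ?y k) + b * (c * ?y k + b * ?z k))\<^sup>2"
        using test_G[OF m pq(1,2), of A c b k] sw[of k] by simp
    qed
    ultimately show ?thesis by simp
  qed
  have b1: "c\<^sup>2 = 1/2" using cc by (simp add: power2_eq_square)
  have b2: "(-c)\<^sup>2 = 1/2" using cc by (simp add: power2_eq_square)
  note t1 = test[OF b1] and t2 = test[OF b2]
  have pw: "(c * (c * x + c * y) + c * (c * y + c * z))\<^sup>2 + (c * (c * x + - c * y) + - c * (c * y + - c * z))\<^sup>2
      = (x + z)\<^sup>2 / 2 + 2 * y\<^sup>2" for x y z :: real
  proof -
    have "(c * (c * x + c * y) + c * (c * y + c * z))\<^sup>2 + (c * (c * x + - c * y) + - c * (c * y + - c * z))\<^sup>2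
        = (c * c)\<^sup>2 * ((x + 2*y + z)\<^sup>2 + (x - 2*y + z)\<^sup>2)" by algebra
    also have "\<dots> = (x + z)\<^sup>2 / 2 + 2 * y\<^sup>2" unfolding cc by (simp add: power2_eq_square algebra_simps)
    finally show ?thesis .
  qed
  have "(\<Sum>k<n. (?x k + ?z k)\<^sup>2 / 2 + 2 * (?y k)\<^sup>2) \<le> 2 * ?s\<^sup>2"
  proof -
    have "(\<Sum>k<n. (?x k + ?z k)\<^sup>2 / 2 + 2 * (?y k)\<^sup>2)
       = (\<Sum>k<n. (c * (c * ?x k + c * ?y k) + c * (c * ?y k + c * ?z k))\<^sup>2)
         + (\<Sum>k<n. (c * (c * ?x k + - c * ?y k) + - c * (c * ?y k + - c * ?z k))\<^sup>2)"
      by (simp only: sum.distrib[symmetric] pw)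
    also have "\<dots> \<le> 2 * ?s\<^sup>2" using t1 t2 by simp
    finally show ?thesis .
  qed
  then show ?thesis
    by (simp add: sum.distrib sum_divide_distrib[symmetric] sum_distrib_left[symmetric] tnrm_def)
qed

lemma four_sq: "4 * a\<^sup>2 \<le> 3 * ((a + b)\<^sup>2 + (a + c)\<^sup>2 + (b + c)\<^sup>2)" for a b c :: real
proof -
  have "3 * ((a + b)\<^sup>2 + (a + c)\<^sup>2 + (b + c)\<^sup>2) - 4 * a\<^sup>2
      = ((a + b) - (a + c))\<^sup>2 + ((a + b) + (b + c))\<^sup>2 + ((a + c) + (b + c))\<^sup>2" by algebra
  moreover have "0 \<le> ((a + b) - (a + c))\<^sup>2 + ((a + b) + (b + c))\<^sup>2 + ((a + c) + (b + c))\<^sup>2" by simp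
  ultimately show ?thesis by linarith
qed

lemma arith_aux:
  fixes S p0 p1 p2 p3 NS FF a b c :: real
  assumes "S - p0 + (S - p1) + (S - p2) + (S - p3) \<le> NS - FF" "p0 \<le> S" "4 * p0 \<le> 3 * (a + b + c)"
    "a \<le> 4 * (S - p1)" "b \<le> 4 * (S - p2)" "c \<le> 4 * (S - p3)"
  shows "3 * FF \<le> 3 * NS - S"
  using assms by argo

lemma sym_main:
  assumes n: "3 \<le> n" and m: "2 \<le> m" and A: "A \<in> sym_tensors n (Suc m)"
  shows "3 * (frob_norm n (Suc m) A)\<^sup>2 \<le> 3 * (real (n ^ m) * (spec_norm n (Suc m) A)\<^sup>2) - (spec_norm n (Suc m) A)\<^sup>2"
proof -
  let ?s = "spec_norm n (Suc m) A" and ?F = "frob_norm n (Suc m) A"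
  let ?\<phi> = "\<lambda>ps. tnrm n (\<lambda>k. A (ps @ [k]))"
  let ?S = "{pre m 0 0, pre m 0 1, pre m 0 2, pre m 1 2}"
  have tot: "(\<Sum>ps\<in>tidx n m. ?s\<^sup>2 - ?\<phi> ps) = real (n ^ m) * ?s\<^sup>2 - ?F\<^sup>2"
    by (simp add: sum_subtractf frob_sq card_tidx)
  have sub: "?S \<subseteq> tidx n m" using n m by (auto intro!: pre_in)
  have "(\<Sum>ps\<in>?S. ?s\<^sup>2 - ?\<phi> ps) \<le> (\<Sum>ps\<in>tidx n m. ?s\<^sup>2 - ?\<phi> ps)"
    by (rule sum_mono2[OF finite_tidx sub]) (auto intro: fiber_le)
  also have "(\<Sum>ps\<in>?S. ?s\<^sup>2 - ?\<phi> ps)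
     = (?s\<^sup>2 - ?\<phi> (pre m 0 0)) + (?s\<^sup>2 - ?\<phi> (pre m 0 1)) + (?s\<^sup>2 - ?\<phi> (pre m 0 2)) + (?s\<^sup>2 - ?\<phi> (pre m 1 2))"
    by (simp add: pre_eq)
  finally have D: "(?s\<^sup>2 - ?\<phi> (pre m 0 0)) + (?s\<^sup>2 - ?\<phi> (pre m 0 1)) + (?s\<^sup>2 - ?\<phi> (pre m 0 2)) + (?s\<^sup>2 - ?\<phi> (pre m 1 2))
     \<le> real (n ^ m) * ?s\<^sup>2 - ?F\<^sup>2" using tot by simp
  have h00: "?\<phi> (pre m 0 0) \<le> ?s\<^sup>2" using n m by (intro fiber_le pre_in) auto
  let ?a = "\<lambda>k. A (pre m 0 0 @ [k])" and ?b = "\<lambda>k. A (pre m 1 1 @ [k])" and ?c = "\<lambda>k. A (pre m 2 2 @ [k])"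
  have p01: "(\<Sum>k<n. (?a k + ?b k)\<^sup>2) \<le> 4 * (?s\<^sup>2 - ?\<phi> (pre m 0 1))"
    using pair_bound[OF A m, of 0 1] n by simp
  have p02: "(\<Sum>k<n. (?a k + ?c k)\<^sup>2) \<le> 4 * (?s\<^sup>2 - ?\<phi> (pre m 0 2))"
    using pair_bound[OF A m, of 0 2] n by simp
  have p12: "(\<Sum>k<n. (?b k + ?c k)\<^sup>2) \<le> 4 * (?s\<^sup>2 - ?\<phi> (pre m 1 2))"
    using pair_bound[OF A m, of 1 2] n by simp
  have "4 * ?\<phi> (pre m 0 0) = (\<Sum>k<n. 4 * (?a k)\<^sup>2)"
    by (simp add: tnrm_def sum_distrib_left)
  also have "\<dots> \<le> (\<Sum>k<n. 3 * ((?a k + ?b k)\<^sup>2 + (?a k + ?c k)\<^sup>2 + (?b k + ?c k)\<^sup>2))"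
    by (intro sum_mono four_sq)
  also have "\<dots> = 3 * ((\<Sum>k<n. (?a k + ?b k)\<^sup>2) + (\<Sum>k<n. (?a k + ?c k)\<^sup>2) + (\<Sum>k<n. (?b k + ?c k)\<^sup>2))"
    by (simp add: sum.distrib sum_distrib_left)
  finally have T: "4 * ?\<phi> (pre m 0 0) \<le> 3 * ((\<Sum>k<n. (?a k + ?b k)\<^sup>2) + (\<Sum>k<n. (?a k + ?c k)\<^sup>2) + (\<Sum>k<n. (?b k + ?c k)\<^sup>2))" .
  from arith_aux[OF D h00 T p01 p02 p12] show ?thesis by simp
qed

lemma sym_ratio:
  assumes n: "3 \<le> n" and m: "2 \<le> m" and A: "A \<in> sym_tensors n (Suc m)" "A \<noteq> (\<lambda>_. 0)"
  shows "sqrt (3 / (3 * real (n ^ m) - 1)) \<le> spec_norm n (Suc m) A / frob_norm n (Suc m) A"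
proof -
  let ?s = "spec_norm n (Suc m) A" and ?F = "frob_norm n (Suc m) A" and ?N = "real (n ^ m)"
  have At: "A \<in> tensors n (Suc m)" using A by (simp add: sym_tensors_def)
  have F: "0 < ?F" by (rule frob_pos[OF At A(2)])
  have s: "0 \<le> ?s" using n by (intro spec_nonneg) auto
  have N: "1 \<le> ?N" using n by simp
  have main: "3 * ?F\<^sup>2 \<le> (3 * ?N - 1) * ?s\<^sup>2"
    using sym_main[OF n m A(1)] by (simp add: algebra_simps)
  have "3 / (3 * ?N - 1) \<le> (?s / ?F)\<^sup>2"
    using main F N by (simp add: power_divide divide_le_eq field_simps)
  then have "sqrt (3 / (3 * ?N - 1)) \<le> sqrt ((?s / ?F)\<^sup>2)" by (rule real_sqrt_le_mono)
  also have "\<dots> = ?s / ?F" using s F by simp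
  finally show ?thesis .
qed

lemma best_sym:
  assumes n: "3 \<le> n" and m: "2 \<le> m"
  shows "1 / sqrt (real n ^ m) < best_r1_ratio n (Suc m) (sym_tensors n (Suc m))"
proof -
  let ?d = "Suc m" and ?N = "real (n ^ m)"
  let ?S = "(\<lambda>A. spec_norm n ?d A / frob_norm n ?d A) ` (sym_tensors n ?d - {\<lambda>_. 0})"
  define J where "J = (\<lambda>ix. if ix \<in> tidx n ?d then 1 else (0::real))"
  have J: "J \<in> sym_tensors n ?d"
  proof -
    have "map (\<lambda>k. ix ! p k) [0..<?d] \<in> tidx n ?d"
      if ix: "ix \<in> tidx n ?d" and p: "p permutes {..<?d}" for ix p
    proof -
      have "ix ! p k < n" if k: "k < ?d" for k
      proof -
        have "p k < ?d" using permutes_in_image[OF p, of k] k by simp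
        then have "ix ! p k \<in> set ix" using ix by (simp add: tidx_def)
        then show ?thesis using ix by (auto simp: tidx_def)
      qed
      then show ?thesis by (auto simp: tidx_def)
    qed
    then show ?thesis by (auto simp: sym_tensors_def tensors_def J_def)
  qed
  have Jnz: "J \<noteq> (\<lambda>_. 0)"
  proof -
    have "replicate ?d 0 \<in> tidx n ?d" using n by (auto simp: tidx_def)
    then have "J (replicate ?d 0) = 1" by (simp add: J_def)
    then show ?thesis by auto
  qed
  have ne: "?S \<noteq> {}" using J Jnz by auto
  have N: "1 \<le> ?N" using n by simp
  have "sqrt (3 / (3 * ?N - 1)) \<le> Inf ?S"
    by (rule cInf_greatest[OF ne]) (use sym_ratio[OF n m] in auto)
  moreover have "1 / sqrt (real n ^ m) < sqrt (3 / (3 * ?N - 1))"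
  proof -
    have "3 / (3 * ?N) < 3 / (3 * ?N - 1)"
    proof (rule divide_strict_left_mono)
      show "0 < 3 * ?N * (3 * ?N - 1)" using N by (intro mult_pos_pos) linarith+
    qed (use N n in auto)
    then have "1 / ?N < 3 / (3 * ?N - 1)" by simp
    then have "sqrt (1 / ?N) < sqrt (3 / (3 * ?N - 1))" by (rule real_sqrt_less_mono)
    then show ?thesis by (simp add: real_sqrt_divide)
  qed
  ultimately show ?thesis unfolding best_r1_ratio_def by linarith
qed

theorem corollary1p7:
  fixes d :: nat
  assumes "d \<ge> 3"
  shows "best_r1_ratio 4 d (tensors 4 d) = 1 / sqrt (4 ^ (d - 1))
       \<and> 1 / sqrt (4 ^ (d - 1)) < best_r1_ratio 4 d (sym_tensors 4 d)
       \<and> best_r1_ratio 8 d (tensors 8 d) = 1 / sqrt (8 ^ (d - 1))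
       \<and> 1 / sqrt (8 ^ (d - 1)) < best_r1_ratio 8 d (sym_tensors 8 d)"
proof -
  obtain m where d: "d = Suc (Suc m)" and m: "1 \<le> m" using assms
    by (metis Suc_le_D Suc_le_mono numeral_3_eq_3 le_add1 plus_1_eq_Suc)
  have dm: "d - 1 = Suc m" using d by simp
  have t4: "best_r1_ratio 4 d (tensors 4 d) = 1 / sqrt (4 ^ (d - 1))"
    unfolding d using best_tensors[of 4 m] nrm4 by simp
  have t8: "best_r1_ratio 8 d (tensors 8 d) = 1 / sqrt (8 ^ (d - 1))"
    unfolding d using best_tensors[of 8 m] nrm8 by simp
  have s4: "1 / sqrt (4 ^ (d - 1)) < best_r1_ratio 4 d (sym_tensors 4 d)"
    unfolding d using best_sym[of 4 "Suc m"] m by simp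
  have s8: "1 / sqrt (8 ^ (d - 1)) < best_r1_ratio 8 d (sym_tensors 8 d)"
    unfolding d using best_sym[of 8 "Suc m"] m by simp
  show ?thesis using t4 t8 s4 s8 by blast
qed


end
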